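(* For every $d\in\mathbb{Z}^+$, every 1-aware population protocol computing the predicate $R\colon\mathbb{Z}^+\to\{0,1\}$, $R(n)=\mathbb{I}\{n\ge d\}$ (i.e. $R(n)=1$ if $n\ge d$ and $R(n)=0$ otherwise), has at least $\log_2 d+1$ states.
   Context: A population protocol is a tuple $\Pi=\langle Q,Q_0,Q_1,q_{init},\delta\rangle$ where $Q$ is a finite set of states, $Q=Q_0\sqcup Q_1$ (disjoint union), $q_{init}\in Q$ is the initial state, and $\delta\colon Q^2\to 2^{Q^2}\setminus\{\varnothing\}$ is the transition function. For $n\in\mathbb{Z}^+$, an $n$-size configuration is a function $C\colon[n]\to Q$, where $[n]=\{1,\dots,n\}$; the initial configuration $I_n$ maps every element to $q_{init}$. A pair $(C_1,C_2)$ of $n$-size configurations is a transition if there are distinct $i,j\in[n]$ with $(C_2(i),C_2(j))\in\delta(C_1(i),C_1(j))$ and $C_2(k)=C_1(k)$ for all $k\ne i,j$ (the pair $(i,j)$ is ordered). $D$ is reachable from $C$ if there is a finite sequence $C=C_1,\dots,C_k=D$ ($k\ge1$) of configurations with each $(C_i,C_{i+1})$ a transition. An execution is an infinite sequence $(C_i)_{i\ge1}$ with $C_1=I_n$ for some $n$ and each $(C_i,C_{i+1})$ a transition; it is fair if whenever a configuration $C$ occurs infinitely often in it and $D$ is reachable from $C$, then $D$ also occurs infinitely often. $\Pi$ is a 1-aware population protocol computing $R\colon\mathbb{Z}^+\to\{0,1\}$ if for every $n\in\mathbb{Z}^+$: if $R(n)=0$ then every configuration $C$ reachable from $I_n$ satisfies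 $C([n])\subseteq Q_0$; and if $R(n)=1$ then for every fair execution $(C_i)_{i\ge1}$ with $C_1=I_n$ there is $i_0$ such that $C_i([n])\subseteq Q_1$ for all $i\ge i_0$. The number of states of $\Pi$ is $|Q|$. *)

theory Defs
  imports Complex_Main
begin

text \<open>A population protocol: state set Q (finite), partition Q = Q0 disjoint-union Q1,
initial state qi, and transition function delta : Q^2 -> nonempty subsets of Q^2.
Configurations of size n are functions nat => 'q; only the values on {1..n} matter
(transitions leave all other positions unchanged, and the initial configuration is
constantly qi).\<close>

definition pop_protocol :: "'q set \<Rightarrow> 'q set \<Rightarrow> 'q set \<Rightarrow> 'q \<Rightarrow> ('q \<Rightarrow> 'q \<Rightarrow> ('q \<times> 'q) set) \<Rightarrow> bool" where
  "pop_protocol Q Q0 Q1 qi \<delta> \<longleftrightarrow>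
     finite Q \<and> Q = Q0 \<union> Q1 \<and> Q0 \<inter> Q1 = {} \<and> qi \<in> Q \<and>
     (\<forall>p\<in>Q. \<forall>q\<in>Q. \<delta> p q \<subseteq> Q \<times> Q \<and> \<delta> p q \<noteq> {})"

definition init_config :: "'q \<Rightarrow> nat \<Rightarrow> 'q" where
  "init_config qi = (\<lambda>_. qi)"

definition transition :: "('q \<Rightarrow> 'q \<Rightarrow> ('q \<times> 'q) set) \<Rightarrow> nat \<Rightarrow> (nat \<Rightarrow> 'q) \<Rightarrow> (nat \<Rightarrow> 'q) \<Rightarrow> bool" where
  "transition \<delta> n C1 C2 \<longleftrightarrow>
     (\<exists>i j. i \<in> {1..n} \<and> j \<in> {1..n} \<and> i \<noteq> j \<and>
        (C2 i, C2 j) \<in> \<delta> (C1 i) (C1 j) \<and> (\<forall>k. k \<noteq> i \<and> k \<noteq> j \<longrightarrow> C2 k = C1 k))"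

definition reachable :: "('q \<Rightarrow> 'q \<Rightarrow> ('q \<times> 'q) set) \<Rightarrow> nat \<Rightarrow> (nat \<Rightarrow> 'q) \<Rightarrow> (nat \<Rightarrow> 'q) \<Rightarrow> bool" where
  "reachable \<delta> n C D \<longleftrightarrow> (transition \<delta> n)\<^sup>*\<^sup>* C D"

definition execution :: "'q \<Rightarrow> ('q \<Rightarrow> 'q \<Rightarrow> ('q \<times> 'q) set) \<Rightarrow> nat \<Rightarrow> (nat \<Rightarrow> nat \<Rightarrow> 'q) \<Rightarrow> bool" where
  "execution qi \<delta> n E \<longleftrightarrow> E 0 = init_config qi \<and> (\<forall>t. transition \<delta> n (E t) (E (Suc t)))"

definition fair :: "('q \<Rightarrow> 'q \<Rightarrow> ('q \<times> 'q) set) \<Rightarrow> nat \<Rightarrow> (nat \<Rightarrow> nat \<Rightarrow> 'q) \<Rightarrow> bool" where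
  "fair \<delta> n E \<longleftrightarrow>
     (\<forall>C D. infinite {t. E t = C} \<and> reachable \<delta> n C D \<longrightarrow> infinite {t. E t = D})"

definition one_aware_computes ::
  "'q set \<Rightarrow> 'q set \<Rightarrow> 'q set \<Rightarrow> 'q \<Rightarrow> ('q \<Rightarrow> 'q \<Rightarrow> ('q \<times> 'q) set) \<Rightarrow> (nat \<Rightarrow> bool) \<Rightarrow> bool" where
  "one_aware_computes Q Q0 Q1 qi \<delta> R \<longleftrightarrow>
     pop_protocol Q Q0 Q1 qi \<delta> \<and>
     (\<forall>n\<ge>1.
        (\<not> R n \<longrightarrow> (\<forall>C. reachable \<delta> n (init_config qi) C \<longrightarrow> C ` {1..n} \<subseteq> Q0)) \<and>
        (R n \<longrightarrow> (\<forall>E. execution qi \<delta> n E \<and> fair \<delta> n E \<longrightarrow>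
                      (\<exists>t0. \<forall>t\<ge>t0. E t ` {1..n} \<subseteq> Q1))))"

end

theory Submission
  imports Defs "HOL-Library.Infinite_Set"
begin


lemma transition_mono:
  "transition \<delta> a X Y \<Longrightarrow> a \<le> b \<Longrightarrow> transition \<delta> b X Y"
  unfolding transition_def by (meson atLeastAtMost_iff le_trans)

lemma reachable_mono:
  "reachable \<delta> a X Y \<Longrightarrow> a \<le> b \<Longrightarrow> reachable \<delta> b X Y"
  unfolding reachable_def
  by (induction rule: rtranclp_induct) (auto intro: rtranclp.rtrancl_into_rtrancl transition_mono)

lemma reach_outside:
  assumes "reachable \<delta> n (init_config qi) C" "k \<notin> {1..n}"
  shows "C k = qi"
  using assms unfolding reachable_def
proof (induction rule: rtranclp_induct)
  case base then show ?case by (simp add: init_config_def)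
next
  case (step y z)
  then show ?case unfolding transition_def by metis
qed

lemma reach_inQ:
  assumes "pop_protocol Q Q0 Q1 qi \<delta>" "reachable \<delta> n (init_config qi) C"
  shows "C k \<in> Q"
  using assms(2) unfolding reachable_def
proof (induction arbitrary: k rule: rtranclp_induct)
  case base
  have "qi \<in> Q" using assms(1) unfolding pop_protocol_def by (elim conjE)
  then show ?case by (simp add: init_config_def)
next
  case (step y z)
  then obtain i j where ij: "(z i, z j) \<in> \<delta> (y i) (y j)" "\<forall>k. k \<noteq> i \<and> k \<noteq> j \<longrightarrow> z k = y k"
    unfolding transition_def by blast
  have "\<delta> (y i) (y j) \<subseteq> Q \<times> Q" using assms(1) step.IH unfolding pop_protocol_def by blast
  then show ?case using ij step.IH by (cases "k = i \<or> k = j") auto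
qed

lemma transition_shift:
  assumes "transition \<delta> b X Y"
  shows "transition \<delta> (a+b) (\<lambda>k. if k \<le> a then Z k else X (k-a)) (\<lambda>k. if k \<le> a then Z k else Y (k-a))"
proof -
  obtain i j where ij: "i \<in> {1..b}" "j \<in> {1..b}" "i \<noteq> j" "(Y i, Y j) \<in> \<delta> (X i) (X j)"
     "\<forall>k. k \<noteq> i \<and> k \<noteq> j \<longrightarrow> Y k = X k"
    using assms unfolding transition_def by blast
  show ?thesis unfolding transition_def
  proof (intro exI conjI allI impI)
    show "i+a \<in> {1..a+b}" "j+a \<in> {1..a+b}" "i+a \<noteq> j+a" using ij(1-3) by auto
    show "((\<lambda>k. if k \<le> a then Z k else Y (k-a)) (i+a), (\<lambda>k. if k \<le> a then Z k else Y (k-a)) (j+a))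
      \<in> \<delta> ((\<lambda>k. if k \<le> a then Z k else X (k-a)) (i+a)) ((\<lambda>k. if k \<le> a then Z k else X (k-a)) (j+a))"
      using ij(1,2,4) by auto
    fix k assume "k \<noteq> i+a \<and> k \<noteq> j+a"
    then show "(if k \<le> a then Z k else Y (k-a)) = (if k \<le> a then Z k else X (k-a))"
    proof (cases "k \<le> a")
      case False
      then have "k - a \<noteq> i \<and> k - a \<noteq> j" using \<open>k \<noteq> i+a \<and> k \<noteq> j+a\<close> by auto
      then show ?thesis using ij(5) False by auto
    qed simp
  qed
qed

lemma reachable_shift:
  assumes "reachable \<delta> b X Y"
  shows "reachable \<delta> (a+b) (\<lambda>k. if k \<le> a then Z k else X (k-a)) (\<lambda>k. if k \<le> a then Z k else Y (k-a))"
  using assms unfolding reachable_def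
  by (induction rule: rtranclp_induct) (auto intro: rtranclp.rtrancl_into_rtrancl transition_shift)

lemma reachable_combine:
  assumes "reachable \<delta> a (init_config qi) C" "reachable \<delta> b (init_config qi) D"
  shows "reachable \<delta> (a+b) (init_config qi) (\<lambda>k. if k \<le> a then C k else D (k-a))"
proof -
  have 1: "reachable \<delta> (a+b) (init_config qi) C" using reachable_mono[OF assms(1)] by simp
  have "C = (\<lambda>k. if k \<le> a then C k else init_config qi (k-a))"
    using reach_outside[OF assms(1)] by (auto simp: init_config_def)
  with 1 have 2: "reachable \<delta> (a+b) (init_config qi) (\<lambda>k. if k \<le> a then C k else init_config qi (k-a))"
    by simp
  show ?thesis using 2 reachable_shift[OF assms(2), of a C] unfolding reachable_def by simp
qed

definition prodset :: "('q \<Rightarrow> 'q \<Rightarrow> ('q \<times> 'q) set) \<Rightarrow> 'q \<Rightarrow> nat \<Rightarrow> 'q set" where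
  "prodset \<delta> qi N = {q. \<exists>C. reachable \<delta> N (init_config qi) C \<and> q \<in> C ` {1..N}}"

lemma prodset_mono: "N \<le> M \<Longrightarrow> prodset \<delta> qi N \<subseteq> prodset \<delta> qi M"
  unfolding prodset_def using reachable_mono by fastforce

lemma prodset_add:
  assumes "p \<in> prodset \<delta> qi a" "p' \<in> prodset \<delta> qi b" "(q, r) \<in> \<delta> p p'"
  shows "q \<in> prodset \<delta> qi (a+b) \<and> r \<in> prodset \<delta> qi (a+b)"
proof -
  obtain C i where C: "reachable \<delta> a (init_config qi) C" "i \<in> {1..a}" "p = C i"
    using assms(1) unfolding prodset_def by blast
  obtain D j where D: "reachable \<delta> b (init_config qi) D" "j \<in> {1..b}" "p' = D j"
    using assms(2) unfolding prodset_def by blast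
  define G where "G = (\<lambda>k. if k \<le> a then C k else D (k-a))"
  have G: "reachable \<delta> (a+b) (init_config qi) G" using reachable_combine[OF C(1) D(1)] G_def by simp
  define H where "H = G(i := q, j+a := r)"
  have "transition \<delta> (a+b) G H" unfolding transition_def
    apply (rule exI[of _ i], rule exI[of _ "j+a"])
    using C D assms(3) by (auto simp: H_def G_def)
  then have H: "reachable \<delta> (a+b) (init_config qi) H"
    using G unfolding reachable_def by auto
  have "q \<in> H ` {1..a+b}" "r \<in> H ` {1..a+b}" using C D
     by (auto simp: H_def image_iff)
  then show ?thesis using H unfolding prodset_def by blast
qed


lemma prodset_sub:
  assumes "pop_protocol Q Q0 Q1 qi \<delta>"
  shows "prodset \<delta> qi N \<subseteq> Q"
  using reach_inQ[OF assms] unfolding prodset_def by blast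

lemma qi_prodset: "N \<ge> 1 \<Longrightarrow> qi \<in> prodset \<delta> qi N"
  unfolding prodset_def reachable_def
  by (rule CollectI, rule exI[of _ "init_config qi"]) (auto simp: init_config_def)

lemma stabilize:
  assumes "N \<ge> 1" "prodset \<delta> qi (N+N) \<subseteq> prodset \<delta> qi N"
  shows "prodset \<delta> qi M \<subseteq> prodset \<delta> qi N"
proof
  fix q assume "q \<in> prodset \<delta> qi M"
  then obtain C where C: "reachable \<delta> M (init_config qi) C" "q \<in> C ` {1..M}"
    unfolding prodset_def by blast
  have "\<forall>k. C k \<in> prodset \<delta> qi N" using C(1) unfolding reachable_def
  proof (induction rule: rtranclp_induct)
    case base then show ?case using qi_prodset[OF assms(1)] by (simp add: init_config_def)
  next
    case (step y z)
    then obtain i j where ij: "(z i, z j) \<in> \<delta> (y i) (y j)" "\<forall>k. k \<noteq> i \<and> k \<noteq> j \<longrightarrow> z k = y k"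
      unfolding transition_def by blast
    have "z i \<in> prodset \<delta> qi (N+N) \<and> z j \<in> prodset \<delta> qi (N+N)"
      using prodset_add[of "y i" \<delta> qi N "y j" N "z i" "z j"] ij(1) step.IH by blast
    then have "z i \<in> prodset \<delta> qi N" "z j \<in> prodset \<delta> qi N" using assms(2) by auto
    then show ?case using ij(2) step.IH by metis
  qed
  then show "q \<in> prodset \<delta> qi N" using C(2) by auto
qed

lemma chain:
  assumes "pop_protocol Q Q0 Q1 qi \<delta>"
  shows "(\<forall>M. prodset \<delta> qi M \<subseteq> prodset \<delta> qi (2^k)) \<or> card (prodset \<delta> qi (2^k)) \<ge> k+1"
proof (induction k)
  case 0
  have "finite (prodset \<delta> qi 1)" using prodset_sub[OF assms] assms unfolding pop_protocol_def
    by (meson finite_subset)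
  then have "card (prodset \<delta> qi 1) \<ge> 1" using qi_prodset[of 1 qi \<delta>]
    by (metis One_nat_def Suc_leI card_gt_0_iff empty_iff le_refl)
  then show ?case by simp
next
  case (Suc k)
  have fin: "finite (prodset \<delta> qi N)" for N using prodset_sub[OF assms] assms unfolding pop_protocol_def
    by (meson finite_subset)
  have mono: "prodset \<delta> qi (2^k) \<subseteq> prodset \<delta> qi (2^Suc k)" by (rule prodset_mono) simp
  have two: "(2::nat)^Suc k = 2^k + 2^k" by simp
  show ?case
  proof (cases "\<forall>M. prodset \<delta> qi M \<subseteq> prodset \<delta> qi (2^k)")
    case True then show ?thesis using mono by blast
  next
    case False
    with Suc.IH have c: "card (prodset \<delta> qi (2^k)) \<ge> k+1" by blast
    show ?thesis
    proof (cases "prodset \<delta> qi (2^Suc k) \<subseteq> prodset \<delta> qi (2^k)")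
      case True
      then have "\<forall>M. prodset \<delta> qi M \<subseteq> prodset \<delta> qi (2^k)"
        using stabilize[of "2^k" \<delta> qi] two True by (metis one_le_power one_le_numeral)
      then show ?thesis using False by blast
    next
      case False
      then have "prodset \<delta> qi (2^k) \<subset> prodset \<delta> qi (2^Suc k)" using mono by blast
      then have "card (prodset \<delta> qi (2^k)) < card (prodset \<delta> qi (2^Suc k))"
        using fin by (rule psubset_card_mono[rotated])
      then show ?thesis using c by simp
    qed
  qed
qed


definition walk where
  "walk \<delta> n f k x y \<longleftrightarrow> f 0 = x \<and> f k = y \<and> (\<forall>i<k. transition \<delta> n (f i) (f (Suc i)))"

lemma reachable_walk:
  "reachable \<delta> n x y \<Longrightarrow> \<exists>f k. walk \<delta> n f k x y"
  unfolding reachable_def walk_def rtranclp_power relpowp_fun_conv by blast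

lemma walk_reachable:
  assumes "walk \<delta> n f k x y" "i \<le> k"
  shows "reachable \<delta> n x (f i)"
  using assms(2)
proof (induction i)
  case 0 then show ?case using assms(1) unfolding walk_def reachable_def by simp
next
  case (Suc i)
  then show ?case using assms(1) unfolding walk_def reachable_def
    by (metis Suc_le_lessD less_imp_le_nat rtranclp.rtrancl_into_rtrancl)
qed

lemma walk_glue:
  assumes "walk \<delta> n f k x y" "walk \<delta> n g l y z"
  shows "walk \<delta> n (\<lambda>t. if t \<le> k then f t else g (t-k)) (k+l) x z \<and>
         f ` {..k} \<union> g ` {..l} \<subseteq> (\<lambda>t. if t \<le> k then f t else g (t-k)) ` {..k+l}"
proof (intro conjI)
  show "walk \<delta> n (\<lambda>t. if t \<le> k then f t else g (t-k)) (k+l) x z"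
    unfolding walk_def
  proof (intro conjI allI impI)
    show "(if 0 \<le> k then f 0 else g (0-k)) = x" using assms(1) unfolding walk_def by simp
    show "(if k + l \<le> k then f (k + l) else g (k + l - k)) = z"
      using assms unfolding walk_def by auto
    fix i assume i: "i < k + l"
    show "transition \<delta> n (if i \<le> k then f i else g (i - k))
            (if Suc i \<le> k then f (Suc i) else g (Suc i - k))"
    proof (cases "Suc i \<le> k")
      case True then show ?thesis using assms(1) unfolding walk_def by auto
    next
      case False
      show ?thesis
      proof (cases "i = k")
        case True
        then show ?thesis using assms i False unfolding walk_def by auto
      next
        case False
        then have "i - k < l" "Suc i - k = Suc (i - k)" "\<not> i \<le> k" using \<open>\<not> Suc i \<le> k\<close> i by auto
        then show ?thesis using assms(2) \<open>\<not> Suc i \<le> k\<close> unfolding walk_def by auto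
      qed
    qed
  qed
  show "f ` {..k} \<union> g ` {..l} \<subseteq> (\<lambda>t. if t \<le> k then f t else g (t-k)) ` {..k+l}"
  proof
    fix w assume "w \<in> f ` {..k} \<union> g ` {..l}"
    then show "w \<in> (\<lambda>t. if t \<le> k then f t else g (t-k)) ` {..k+l}"
    proof
      assume "w \<in> f ` {..k}"
      then obtain t where "t \<le> k" "w = f t" by auto
      then show ?thesis by (intro image_eqI[of _ _ t]) auto
    next
      assume "w \<in> g ` {..l}"
      then obtain t where t: "t \<le> l" "w = g t" by auto
      show ?thesis
      proof (cases "t = 0")
        case True
        then have "w = f k" using t assms unfolding walk_def by simp
        then show ?thesis by (intro image_eqI[of _ _ k]) auto
      next
        case False
        then show ?thesis using t by (intro image_eqI[of _ _ "k+t"]) auto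
      qed
    qed
  qed
qed

lemma fair_exists:
  assumes pp: "pop_protocol Q Q0 Q1 qi \<delta>" and n2: "n \<ge> 2"
  shows "\<exists>E. execution qi \<delta> n E \<and> fair \<delta> n E"
proof -
  define Reach where "Reach C = {D. reachable \<delta> n C D}" for C
  define R0 where "R0 = Reach (init_config qi)"
  have trans: "reachable \<delta> n x y \<Longrightarrow> reachable \<delta> n y z \<Longrightarrow> reachable \<delta> n x z" for x y z
    unfolding reachable_def by (rule rtranclp_trans)
  have finQ: "finite Q" using pp unfolding pop_protocol_def by blast
  have "R0 \<subseteq> {f. \<forall>x. (x \<in> {1..n} \<longrightarrow> f x \<in> Q) \<and> (x \<notin> {1..n} \<longrightarrow> f x = qi)}"
  proof
    fix C assume "C \<in> R0"
    then have C: "reachable \<delta> n (init_config qi) C" unfolding R0_def Reach_def by simp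
    show "C \<in> {f. \<forall>x. (x \<in> {1..n} \<longrightarrow> f x \<in> Q) \<and> (x \<notin> {1..n} \<longrightarrow> f x = qi)}"
      using reach_inQ[OF pp C] reach_outside[OF C] by simp
  qed
  then have finR0: "finite R0" using finite_set_of_finite_funs[OF _ finQ, of "{1..n}" qi]
    by (meson finite_atLeastAtMost finite_subset)
  have sub: "C \<in> R0 \<Longrightarrow> Reach C \<subseteq> R0" for C unfolding R0_def Reach_def using trans by blast
  have "init_config qi \<in> R0" unfolding R0_def Reach_def reachable_def by simp
  then obtain B where B: "B \<in> R0" and Bmin: "\<And>C. C \<in> R0 \<Longrightarrow> card (Reach B) \<le> card (Reach C)"
    using ex_has_least_nat[of "\<lambda>C. C \<in> R0" "init_config qi" "\<lambda>C. card (Reach C)"] by blast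
  have bottom: "reachable \<delta> n D B" if "reachable \<delta> n B D" for D
  proof -
    have D: "D \<in> R0" using sub[OF B] that unfolding Reach_def by blast
    have s: "Reach D \<subseteq> Reach B" unfolding Reach_def using trans that by blast
    have "finite (Reach B)" using sub[OF B] finR0 finite_subset by blast
    then have "Reach D = Reach B" using card_subset_eq s Bmin[OF D]
      by (metis card_mono le_antisym)
    moreover have "B \<in> Reach B" unfolding Reach_def reachable_def by simp
    ultimately show ?thesis unfolding Reach_def by blast
  qed
  have BQ: "B k \<in> Q" for k using B reach_inQ[OF pp] unfolding R0_def Reach_def by blast
  obtain u v where uv: "(u, v) \<in> \<delta> (B 1) (B 2)"
    using pp BQ unfolding pop_protocol_def by (metis all_not_in_conv surj_pair)
  define Y where "Y = B(1 := u, 2 := v)"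
  have BY: "transition \<delta> n B Y" unfolding transition_def
    apply (rule exI[of _ 1], rule exI[of _ 2]) using n2 uv by (auto simp: Y_def)
  then have "reachable \<delta> n B Y" unfolding reachable_def by simp
  then obtain f0 k0 where f0: "walk \<delta> n f0 k0 Y B" using bottom reachable_walk by blast
  define c0 where "c0 = (\<lambda>t. if t = 0 then B else f0 (t - 1))"
  have c0: "walk \<delta> n c0 (Suc k0) B B" using f0 BY unfolding walk_def c0_def
    by (auto simp: less_Suc_eq_0_disj)
  have cyc: "\<exists>f k. k > 0 \<and> walk \<delta> n f k B B \<and> T \<subseteq> f ` {..k}" if "finite T" "T \<subseteq> Reach B" for T
    using that
  proof (induction T rule: finite_induct)
    case empty then show ?case using c0 by blast
  next
    case (insert s T)
    then obtain f k where fk: "k > 0" "walk \<delta> n f k B B" "T \<subseteq> f ` {..k}" by blast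
    have "reachable \<delta> n B s" using insert.prems unfolding Reach_def by blast
    then obtain h a where h: "walk \<delta> n h a B s" using reachable_walk by blast
    obtain h' b where h': "walk \<delta> n h' b s B" using bottom \<open>reachable \<delta> n B s\<close> reachable_walk by blast
    note g1 = walk_glue[OF fk(2) h]
    have "s \<in> h ` {..a}" using h unfolding walk_def by auto
    define F1 where "F1 = (\<lambda>t. if t \<le> k then f t else h (t-k))"
    define F2 where "F2 = (\<lambda>t. if t \<le> k + a then F1 t else h' (t-(k+a)))"
    have w1: "walk \<delta> n F1 (k+a) B s" "f ` {..k} \<union> h ` {..a} \<subseteq> F1 ` {..k+a}"
      using g1 unfolding F1_def by blast+
    have w2: "walk \<delta> n F2 (k+a+b) B B" "F1 ` {..k+a} \<union> h' ` {..b} \<subseteq> F2 ` {..k+a+b}"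
      using walk_glue[OF w1(1) h'] unfolding F2_def by blast+
    have "insert s T \<subseteq> F2 ` {..k + a + b}" using w1(2) w2(2) fk(3) \<open>s \<in> h ` {..a}\<close> by blast
    then show ?case using w2(1) fk(1) by (intro exI[of _ F2] exI[of _ "k+a+b"] conjI) auto
  qed
  have "finite (Reach B)" using sub[OF B] finR0 finite_subset by blast
  then obtain f k where fk: "k > 0" "walk \<delta> n f k B B" "Reach B \<subseteq> f ` {..k}"
    using cyc by blast
  obtain g l where g: "walk \<delta> n g l (init_config qi) B" using B reachable_walk unfolding R0_def Reach_def by blast
  define E where "E t = (if t \<le> l then g t else f ((t - l) mod k))" for t
  have Eper: "E t = f ((t - l) mod k)" if "t \<ge> l" for t
    using that g fk unfolding E_def walk_def by auto
  have Estep: "transition \<delta> n (E t) (E (Suc t))" for t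
  proof (cases "t < l")
    case True then show ?thesis using g unfolding E_def walk_def by auto
  next
    case False
    define r where "r = (t - l) mod k"
    have r: "r < k" using fk(1) r_def by simp
    have et: "E t = f r" using Eper False r_def by simp
    have "Suc t - l = Suc (t - l)" using False by simp
    then have "E (Suc t) = f (Suc (t - l) mod k)" using Eper False by simp
    also have "\<dots> = f (Suc r)"
      using fk(2) unfolding walk_def mod_Suc r_def by auto
    finally show ?thesis using et fk(2) r unfolding walk_def by simp
  qed
  have exe: "execution qi \<delta> n E" unfolding execution_def using Estep g unfolding E_def walk_def by simp
  have fair: "fair \<delta> n E" unfolding fair_def
  proof (intro allI impI, elim conjE)
    fix C D assume inf: "infinite {t. E t = C}" and CD: "reachable \<delta> n C D"
    have "C \<in> f ` {..<k}"
    proof (rule ccontr)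
      assume nC: "C \<notin> f ` {..<k}"
      have "{t. E t = C} \<subseteq> {..l}"
      proof
        fix t assume "t \<in> {t. E t = C}"
        then have "E t = C" by simp
        show "t \<in> {..l}"
        proof (rule ccontr)
          assume "t \<notin> {..l}"
          then have "E t = f ((t - l) mod k)" using Eper by simp
          then show False using nC \<open>E t = C\<close> fk(1) by auto
        qed
      qed
      then show False using inf finite_subset by blast
    qed
    then obtain r where r: "r < k" "C = f r" by auto
    have "reachable \<delta> n B C" using walk_reachable[OF fk(2), of r] r by simp
    then have "D \<in> Reach B" using CD trans unfolding Reach_def by blast
    then obtain r' where r': "r' \<le> k" "D = f r'" using fk(3) by auto
    obtain r'' where r'': "r'' < k" "D = f r''"
    proof (cases "r' = k")
      case True then show ?thesis using that[of 0] fk r' unfolding walk_def by auto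
    next
      case False then show ?thesis using that[of r'] r' by auto
    qed
    show "infinite {t. E t = D}" unfolding infinite_nat_iff_unbounded_le
    proof
      fix m
      have "1 \<le> k" using fk(1) by simp
      then have "m * 1 \<le> m * k" by (rule mult_le_mono2)
      then have "m \<le> m * k" by simp
      then have "l + r'' + m * k \<ge> m" by linarith
      moreover have "E (l + r'' + m * k) = D" using Eper[of "l + r'' + m * k"] r'' by simp
      ultimately show "\<exists>t\<ge>m. t \<in> {t. E t = D}" by blast
    qed
  qed
  show ?thesis using exe fair by blast
qed


lemma exec_reachable:
  assumes "execution qi \<delta> n E" shows "reachable \<delta> n (init_config qi) (E t)"
proof (induction t)
  case 0 then show ?case using assms unfolding execution_def reachable_def by simp
next
  case (Suc t) then show ?case using assms unfolding execution_def reachable_def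
    by (meson rtranclp.rtrancl_into_rtrancl)
qed

theorem theorem2:
  fixes Q Q0 Q1 :: "'q set" and qi :: 'q and \<delta> :: "'q \<Rightarrow> 'q \<Rightarrow> ('q \<times> 'q) set" and d :: nat
  assumes "d \<ge> 1"
    and "one_aware_computes Q Q0 Q1 qi \<delta> (\<lambda>n. n \<ge> d)"
  shows "real (card Q) \<ge> log 2 (real d) + 1"
proof -
  have pp: "pop_protocol Q Q0 Q1 qi \<delta>" using assms(2) unfolding one_aware_computes_def by blast
  have finQ: "finite Q" and qiQ: "qi \<in> Q" and disj: "Q0 \<inter> Q1 = {}"
    using pp unfolding pop_protocol_def by blast+
  have cQ: "card Q \<ge> 1" using finQ qiQ by (metis One_nat_def Suc_leI card_gt_0_iff empty_iff)
  define m where "m = card Q - 1"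
  have dle: "d \<le> 2 ^ m"
  proof (rule ccontr)
    assume "\<not> d \<le> 2 ^ m"
    then have dlt: "2 ^ m < d" by simp
    then have d2: "d \<ge> 2" by (metis Suc_1 Suc_leI le_less_trans one_le_power one_le_numeral)
    obtain E where E: "execution qi \<delta> d E" "fair \<delta> d E" using fair_exists[OF pp d2] by blast
    have "\<exists>t0. \<forall>t\<ge>t0. E t ` {1..d} \<subseteq> Q1"
      using assms(2) d2 E unfolding one_aware_computes_def by simp
    then obtain t0 where t0: "\<forall>t\<ge>t0. E t ` {1..d} \<subseteq> Q1" by blast
    have q1: "E t0 1 \<in> Q1" using t0[rule_format, of t0] d2 by auto
    have qP: "E t0 1 \<in> prodset \<delta> qi d" unfolding prodset_def
      using exec_reachable[OF E(1), of t0] d2 by (intro CollectI exI[of _ "E t0"]) auto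
    have st: "\<forall>M. prodset \<delta> qi M \<subseteq> prodset \<delta> qi (2^m)"
    proof (cases "\<forall>M. prodset \<delta> qi M \<subseteq> prodset \<delta> qi (2^m)")
      case False
      then have "card (prodset \<delta> qi (2^m)) \<ge> card Q" using chain[OF pp, of m] m_def cQ by auto
      then have "prodset \<delta> qi (2^m) = Q" using prodset_sub[OF pp] finQ card_seteq by blast
      then show ?thesis using prodset_sub[OF pp] by blast
    qed
    then obtain C where C: "reachable \<delta> (2^m) (init_config qi) C" "E t0 1 \<in> C ` {1..2^m}"
      using qP unfolding prodset_def by blast
    have "\<not> d \<le> 2^m" using dlt by simp
    then have "C ` {1..2^m} \<subseteq> Q0" using assms(2) C(1) unfolding one_aware_computes_def
      by (metis one_le_numeral one_le_power)
    then show False using C(2) q1 disj by blast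
  qed
  have "log 2 (real d) \<le> log 2 (2 ^ m)"
    using dle assms(1) by (subst log_le_cancel_iff) (auto simp del: of_nat_power simp: of_nat_power[symmetric])
  also have "\<dots> = real m" by (simp add: log_nat_power)
  finally show ?thesis using m_def cQ by simp
qed

end
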